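(* Let $\mathrm{Alg}_r(G_1)$ be the category of reachable pointed automata over $\Sigma$ and $\mathcal{C}$ the category of congruences on the monoid $\Sigma^\ast$ (both as described in the context). Define $T:\mathrm{Alg}_r(G_1)\to\mathcal{C}$ on objects by $T(X,\overline{x},\delta)=\ker\delta^\sharp$, and on morphisms by sending a morphism $h:(X,\overline{x},\delta_X)\to(Y,\overline{y},\delta_Y)$ to the inclusion $\ker\delta_X^\sharp\subseteq\ker\delta_Y^\sharp$. Define $M:\mathcal{C}\to\mathrm{Alg}_r(G_1)$ on objects by $M(C)=(\Sigma^\ast/C,\,[\epsilon]_C,\,\sigma_C)$ with $\sigma_C([w]_C)(a)=[wa]_C$ for $w\in\Sigma^\ast$, $a\in\Sigma$, and on a morphism $C\subseteq D$ by the map $[w]_C\mapsto[w]_D$. Then $T$ and $M$ are well-defined functors and $T$ is a right adjoint of $M$ (i.e. $M\dashv T$).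
   Context: $\Sigma$ is a fixed finite alphabet, $\Sigma^\ast$ the free monoid of finite words with empty word $\epsilon$. A pointed automaton is a triple $(X,\overline{x},\delta)$ with $X$ a set (possibly infinite), $\overline{x}\in X$ and $\delta:X\to X^\Sigma$; $\delta$ is extended to $X\to X^{\Sigma^\ast}$ by $\delta(x)(\epsilon)=x$, $\delta(x)(wa)=\delta(\delta(x)(w))(a)$. It is reachable if every $x\in X$ equals $\delta(\overline{x})(u)$ for some $u\in\Sigma^\ast$. A morphism $h:(X,\overline{x},\delta_X)\to(Y,\overline{y},\delta_Y)$ is a map $h:X\to Y$ with $h(\overline{x})=\overline{y}$ and $h(\delta_X(x)(a))=\delta_Y(h(x))(a)$ for all $x\in X,a\in\Sigma$. $\mathrm{Alg}_r(G_1)$ is the category of reachable pointed automata and such morphisms. For a pointed automaton, $\delta^\sharp:\Sigma^\ast\to X^X$ is the monoid homomorphism (into $X^X$ under composition) $\delta^\sharp(u)(x)=\delta(x)(u)$, so $\ker\delta^\sharp=\{(u,v)\in\Sigma^\ast\times\Sigma^\ast\mid \forall x\in X:\ \delta(x)(u)=\delta(x)(v)\}$. $\mathcal{C}$ is the category whose objects are congruences on the monoid $\Sigma^\ast$ and whose morphisms are inclusions (so it is a preorder). *)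

theory Defs
  imports Main
begin

definition delta_star :: "('s \<Rightarrow> 'a \<Rightarrow> 's) \<Rightarrow> 's \<Rightarrow> 'a list \<Rightarrow> 's" where
  "delta_star \<delta> x w = foldl \<delta> x w"

definition is_automaton :: "'s set \<Rightarrow> 's \<Rightarrow> ('s \<Rightarrow> 'a \<Rightarrow> 's) \<Rightarrow> bool" where
  "is_automaton X x0 \<delta> \<longleftrightarrow> x0 \<in> X \<and> (\<forall>x\<in>X. \<forall>a. \<delta> x a \<in> X)"

definition reachable_aut :: "'s set \<Rightarrow> 's \<Rightarrow> ('s \<Rightarrow> 'a \<Rightarrow> 's) \<Rightarrow> bool" where
  "reachable_aut X x0 \<delta> \<longleftrightarrow> is_automaton X x0 \<delta> \<and> (\<forall>x\<in>X. \<exists>u. x = delta_star \<delta> x0 u)"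

definition aut_morph ::
  "'s set \<Rightarrow> 's \<Rightarrow> ('s \<Rightarrow> 'a \<Rightarrow> 's) \<Rightarrow> 't set \<Rightarrow> 't \<Rightarrow> ('t \<Rightarrow> 'a \<Rightarrow> 't) \<Rightarrow> ('s \<Rightarrow> 't) \<Rightarrow> bool" where
  "aut_morph X x0 \<delta> Y y0 \<gamma> h \<longleftrightarrow>
     (\<forall>x\<in>X. h x \<in> Y) \<and> h x0 = y0 \<and> (\<forall>x\<in>X. \<forall>a. h (\<delta> x a) = \<gamma> (h x) a)"

definition ker_aut :: "'s set \<Rightarrow> ('s \<Rightarrow> 'a \<Rightarrow> 's) \<Rightarrow> ('a list \<times> 'a list) set" where
  "ker_aut X \<delta> = {(u, v). \<forall>x\<in>X. delta_star \<delta> x u = delta_star \<delta> x v}"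

definition monoid_congruence :: "('a list \<times> 'a list) set \<Rightarrow> bool" where
  "monoid_congruence C \<longleftrightarrow> equiv UNIV C \<and>
     (\<forall>u v x y. (u, v) \<in> C \<longrightarrow> (x, y) \<in> C \<longrightarrow> (u @ x, v @ y) \<in> C)"

text \<open>The functor M on objects: carrier Sigma*/C, point [epsilon]_C, transition sigma_C
(defined via a chosen representative).\<close>
definition M_carrier :: "('a list \<times> 'a list) set \<Rightarrow> 'a list set set" where
  "M_carrier C = UNIV // C"

definition M_point :: "('a list \<times> 'a list) set \<Rightarrow> 'a list set" where
  "M_point C = C `` {[]}"

definition M_trans :: "('a list \<times> 'a list) set \<Rightarrow> 'a list set \<Rightarrow> 'a \<Rightarrow> 'a list set" where
  "M_trans C q a = C `` {(SOME w. w \<in> q) @ [a]}"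

definition M_mor :: "('a list \<times> 'a list) set \<Rightarrow> ('a list \<times> 'a list) set \<Rightarrow> 'a list set \<Rightarrow> 'a list set" where
  "M_mor C D q = D `` {SOME w. w \<in> q}"

end

theory Submission
  imports Defs
begin

lemma ds_append[simp]: "delta_star d x (u @ v) = delta_star d (delta_star d x u) v"
  by (simp add: delta_star_def)
lemma ds_nil[simp]: "delta_star d x [] = x" by (simp add: delta_star_def)
lemma ds_single[simp]: "delta_star d x [a] = d x a" by (simp add: delta_star_def)
lemma ds_snoc: "delta_star d x (u @ [a]) = d (delta_star d x u) a" by simp

lemma ds_closed: "is_automaton X x0 d \<Longrightarrow> x \<in> X \<Longrightarrow> delta_star d x u \<in> X"
  by (induct u arbitrary: x) (auto simp: is_automaton_def delta_star_def)

lemma morph_ds: "aut_morph X x0 d Y y0 g h \<Longrightarrow> is_automaton X x0 d \<Longrightarrow> x \<in> X \<Longrightarrow>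
   h (delta_star d x u) = delta_star g (h x) u"
  by (induct u rule: rev_induct) (auto simp: aut_morph_def ds_closed)

lemma P1: assumes "reachable_aut X x0 d" shows "monoid_congruence (ker_aut X d)"
proof -
  have A: "is_automaton X x0 d" using assms unfolding reachable_aut_def by blast
  show ?thesis unfolding monoid_congruence_def
  proof (intro conjI allI impI)
    show "equiv UNIV (ker_aut X d)"
    proof (rule equivI)
      show "refl_on UNIV (ker_aut X d)" by (rule refl_onI) (auto simp: ker_aut_def)
      show "ker_aut X d \<subseteq> UNIV \<times> UNIV" by simp
      show "sym (ker_aut X d)" by (rule symI) (auto simp: ker_aut_def)
      show "trans (ker_aut X d)" by (rule transI) (auto simp: ker_aut_def)
    qed
  next
    fix u v x y assume "(u, v) \<in> ker_aut X d" "(x, y) \<in> ker_aut X d"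
    then have k1: "\<And>p. p \<in> X \<Longrightarrow> delta_star d p u = delta_star d p v"
      and k2: "\<And>p. p \<in> X \<Longrightarrow> delta_star d p x = delta_star d p y" by (auto simp: ker_aut_def)
    have "delta_star d p (u @ x) = delta_star d p (v @ y)" if p: "p \<in> X" for p
      using k1[OF p] k2[OF ds_closed[OF A p, of v]] by simp
    then show "(u @ x, v @ y) \<in> ker_aut X d" by (simp add: ker_aut_def)
  qed
qed

lemma P2: assumes "reachable_aut X x0 d" "reachable_aut Y y0 g" "aut_morph X x0 d Y y0 g h"
  shows "ker_aut X d \<subseteq> ker_aut Y g"
proof
  have A: "is_automaton X x0 d" using assms(1) unfolding reachable_aut_def by blast
  fix p assume p: "p \<in> ker_aut X d"
  obtain u v where uv: "p = (u, v)" by (cases p)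
  have "delta_star g y u = delta_star g y v" if y: "y \<in> Y" for y
  proof -
    obtain w where w: "y = delta_star g y0 w" using assms(2) y unfolding reachable_aut_def by blast
    have x0: "x0 \<in> X" using A unfolding is_automaton_def by blast
    have hx0: "h x0 = y0" using assms(3) unfolding aut_morph_def by blast
    let ?x = "delta_star d x0 w"
    have xX: "?x \<in> X" using ds_closed[OF A x0] .
    have yy: "y = h ?x" using morph_ds[OF assms(3) A x0] hx0 w by simp
    have "delta_star g y u = h (delta_star d ?x u)" using morph_ds[OF assms(3) A xX] yy by simp
    also have "\<dots> = h (delta_star d ?x v)" using p uv xX by (auto simp: ker_aut_def)
    also have "\<dots> = delta_star g y v" using morph_ds[OF assms(3) A xX] yy by simp
    finally show ?thesis .
  qed
  then show "p \<in> ker_aut Y g" using uv by (auto simp: ker_aut_def)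
qed

lemma cong_equiv: "monoid_congruence C \<Longrightarrow> equiv UNIV C" by (simp add: monoid_congruence_def)

lemma class_eq: "monoid_congruence C \<Longrightarrow> (C `` {u} = C `` {v}) = ((u, v) \<in> C)"
  using cong_equiv eq_equiv_class_iff by (metis UNIV_I)

lemma some_in: "monoid_congruence C \<Longrightarrow> (w, SOME x. x \<in> C `` {w}) \<in> C"
proof -
  assume c: "monoid_congruence C"
  have "w \<in> C `` {w}" using cong_equiv[OF c] by (auto simp: equiv_def refl_on_def)
  then have "(SOME x. x \<in> C `` {w}) \<in> C `` {w}" by (rule someI)
  then show ?thesis by simp
qed

lemma trans_cls: "monoid_congruence C \<Longrightarrow> M_trans C (C `` {w}) a = C `` {w @ [a]}"
proof -
  assume c: "monoid_congruence C"
  have "(w, SOME x. x \<in> C `` {w}) \<in> C" using some_in[OF c] .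
  moreover have "([a],[a]) \<in> C" using cong_equiv[OF c] by (auto simp: equiv_def refl_on_def)
  ultimately have "(w @ [a], (SOME x. x \<in> C `` {w}) @ [a]) \<in> C"
    using c unfolding monoid_congruence_def by blast
  then have eq: "C `` {w @ [a]} = C `` {(SOME x. x \<in> C `` {w}) @ [a]}" by (rule class_eq[OF c, THEN iffD2])
  show ?thesis by (simp only: M_trans_def eq)
qed

lemma carrier_cases: "q \<in> M_carrier C \<Longrightarrow> \<exists>w. q = C `` {w}"
  by (auto simp: M_carrier_def quotient_def)

lemma cls_in: "C `` {w} \<in> M_carrier C"
  by (auto simp: M_carrier_def quotient_def)

lemma ds_M: "monoid_congruence C \<Longrightarrow> delta_star (M_trans C) (M_point C) w = C `` {w}"
proof (induct w rule: rev_induct)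
  case Nil
  then show ?case by (simp add: M_point_def)
next
  case (snoc x xs)
  then show ?case by (simp only: ds_snoc trans_cls)
qed

lemma P3: "monoid_congruence C \<Longrightarrow> reachable_aut (M_carrier C) (M_point C) (M_trans C)"
  unfolding reachable_aut_def is_automaton_def
proof (intro conjI ballI allI)
  assume c: "monoid_congruence C"
  show "M_point C \<in> M_carrier C" unfolding M_point_def by (rule cls_in)
  fix q assume q: "q \<in> M_carrier C"
  then obtain w where w: "q = C `` {w}" using carrier_cases by blast
  show "\<exists>u. q = delta_star (M_trans C) (M_point C) u" using ds_M[OF c, of w] w by blast
  fix a show "M_trans C q a \<in> M_carrier C" using w trans_cls[OF c] cls_in by simp
qed

lemma mor_cls: "monoid_congruence C \<Longrightarrow> monoid_congruence D \<Longrightarrow> C \<subseteq> D \<Longrightarrow> M_mor C D (C `` {w}) = D `` {w}"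
proof -
  assume c: "monoid_congruence C" "monoid_congruence D" "C \<subseteq> D"
  have "(w, SOME x. x \<in> C `` {w}) \<in> D" using some_in[OF c(1), of w] c(3) by blast
  then have "D `` {SOME x. x \<in> C `` {w}} = D `` {w}" using class_eq[OF c(2)] by blast
  then show ?thesis unfolding M_mor_def .
qed

lemma P4: "monoid_congruence C \<Longrightarrow> monoid_congruence D \<Longrightarrow> C \<subseteq> D \<Longrightarrow>
   aut_morph (M_carrier C) (M_point C) (M_trans C) (M_carrier D) (M_point D) (M_trans D) (M_mor C D)"
  unfolding aut_morph_def
proof (intro conjI ballI allI)
  assume c: "monoid_congruence C" "monoid_congruence D" "C \<subseteq> D"
  show "M_mor C D (M_point C) = M_point D" unfolding M_point_def by (rule mor_cls[OF c])
  fix q assume q: "q \<in> M_carrier C"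
  then obtain w where w: "q = C `` {w}" using carrier_cases by blast
  show "M_mor C D q \<in> M_carrier D" using w mor_cls[OF c] cls_in by simp
  fix a show "M_mor C D (M_trans C q a) = M_trans D (M_mor C D q) a"
  proof -
    have "M_mor C D (M_trans C q a) = D `` {w @ [a]}" unfolding w trans_cls[OF c(1)] mor_cls[OF c] ..
    also have "\<dots> = M_trans D (M_mor C D q) a" unfolding w mor_cls[OF c] trans_cls[OF c(2)] ..
    finally show ?thesis .
  qed
qed

lemma morM: assumes "monoid_congruence C" "reachable_aut X x0 d"
  "aut_morph (M_carrier C) (M_point C) (M_trans C) X x0 d h"
  shows "h (C `` {w}) = delta_star d x0 w"
proof -
  have A: "is_automaton (M_carrier C) (M_point C) (M_trans C)"
    using P3[OF assms(1)] by (simp add: reachable_aut_def)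
  have p: "M_point C \<in> M_carrier C" using A by (simp add: is_automaton_def)
  have "h (delta_star (M_trans C) (M_point C) w) = delta_star d (h (M_point C)) w"
    by (rule morph_ds[OF assms(3) A p])
  moreover have "h (M_point C) = x0" using assms(3) by (simp add: aut_morph_def)
  ultimately show ?thesis unfolding ds_M[OF assms(1)] by simp
qed

lemma P7a: assumes "monoid_congruence C" "reachable_aut X x0 d"
  "aut_morph (M_carrier C) (M_point C) (M_trans C) X x0 d h"
  shows "C \<subseteq> ker_aut X d"
proof
  fix p assume p: "p \<in> C"
  obtain u v where uv: "p = (u, v)" by (cases p)
  have "delta_star d x u = delta_star d x v" if x: "x \<in> X" for x
  proof -
    obtain w where w: "x = delta_star d x0 w" using assms(2) x unfolding reachable_aut_def by blast
    have "(w @ u, w @ v) \<in> C" using p uv assms(1) cong_equiv[OF assms(1)]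
      unfolding monoid_congruence_def equiv_def refl_on_def by blast
    then have "C `` {w @ u} = C `` {w @ v}" using class_eq[OF assms(1)] by simp
    then have "delta_star d x0 (w @ u) = delta_star d x0 (w @ v)" using morM[OF assms] by metis
    then show ?thesis using w by simp
  qed
  then show "p \<in> ker_aut X d" using uv by (auto simp: ker_aut_def)
qed

lemma P7b: assumes "monoid_congruence C" "reachable_aut X x0 d" "C \<subseteq> ker_aut X d"
  shows "aut_morph (M_carrier C) (M_point C) (M_trans C) X x0 d (\<lambda>q. delta_star d x0 (SOME w. w \<in> q))"
proof -
  have A: "is_automaton X x0 d" using assms(2) unfolding reachable_aut_def by blast
  have x0: "x0 \<in> X" using A unfolding is_automaton_def by blast
  have key: "delta_star d x0 (SOME x. x \<in> C `` {w}) = delta_star d x0 w" for w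
    using some_in[OF assms(1), of w] assms(3) x0 by (auto simp: ker_aut_def)
  show ?thesis unfolding aut_morph_def
  proof (intro conjI ballI allI)
    show "delta_star d x0 (SOME w. w \<in> M_point C) = x0" unfolding M_point_def key by simp
    fix q assume q: "q \<in> M_carrier C"
    then obtain w where w: "q = C `` {w}" using carrier_cases by blast
    show "delta_star d x0 (SOME w. w \<in> q) \<in> X" using ds_closed[OF A x0] .
    fix a show "delta_star d x0 (SOME w. w \<in> M_trans C q a) = d (delta_star d x0 (SOME w. w \<in> q)) a"
      unfolding w trans_cls[OF assms(1)] key ds_snoc ..
  qed
qed


theorem mainTheorem1:
  fixes dummy :: "'a::finite itself"
  shows
  \<comment> \<open>T is well defined on objects\<close>
  "(\<forall>(X :: 's set) x0 (\<delta> :: 's \<Rightarrow> 'a \<Rightarrow> 's). reachable_aut X x0 \<delta> \<longrightarrow>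
       monoid_congruence (ker_aut X \<delta>))
   \<comment> \<open>T is well defined on morphisms\<close>
   \<and> (\<forall>(X :: 's set) x0 (\<delta> :: 's \<Rightarrow> 'a \<Rightarrow> 's) (Y :: 't set) y0 \<gamma> h.
        reachable_aut X x0 \<delta> \<longrightarrow> reachable_aut Y y0 \<gamma> \<longrightarrow> aut_morph X x0 \<delta> Y y0 \<gamma> h \<longrightarrow>
        ker_aut X \<delta> \<subseteq> ker_aut Y \<gamma>)
   \<comment> \<open>M is well defined on objects\<close>
   \<and> (\<forall>C :: ('a list \<times> 'a list) set. monoid_congruence C \<longrightarrow>
        reachable_aut (M_carrier C) (M_point C) (M_trans C)
        \<and> (\<forall>w a. M_trans C (C `` {w}) a = C `` {w @ [a]}))
   \<comment> \<open>M is well defined on morphisms and functorial\<close>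
   \<and> (\<forall>C D :: ('a list \<times> 'a list) set. monoid_congruence C \<longrightarrow> monoid_congruence D \<longrightarrow> C \<subseteq> D \<longrightarrow>
        (\<forall>w. M_mor C D (C `` {w}) = D `` {w})
        \<and> aut_morph (M_carrier C) (M_point C) (M_trans C) (M_carrier D) (M_point D) (M_trans D) (M_mor C D))
   \<and> (\<forall>C :: ('a list \<times> 'a list) set. monoid_congruence C \<longrightarrow> (\<forall>q\<in>M_carrier C. M_mor C C q = q))
   \<and> (\<forall>C D E :: ('a list \<times> 'a list) set. monoid_congruence C \<longrightarrow> monoid_congruence D \<longrightarrow>
        monoid_congruence E \<longrightarrow> C \<subseteq> D \<longrightarrow> D \<subseteq> E \<longrightarrow>
        (\<forall>q\<in>M_carrier C. M_mor D E (M_mor C D q) = M_mor C E q))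
   \<comment> \<open>M is left adjoint to T: Hom(M C, A) \<cong> Hom(C, T A), where the latter is a subsingleton
       (nonempty iff C \<subseteq> T A); naturality is automatic since C is a preorder\<close>
   \<and> (\<forall>(C :: ('a list \<times> 'a list) set) (X :: 's set) x0 (\<delta> :: 's \<Rightarrow> 'a \<Rightarrow> 's).
        monoid_congruence C \<longrightarrow> reachable_aut X x0 \<delta> \<longrightarrow>
        ((\<exists>h. aut_morph (M_carrier C) (M_point C) (M_trans C) X x0 \<delta> h) \<longleftrightarrow> C \<subseteq> ker_aut X \<delta>)
        \<and> (\<forall>h1 h2. aut_morph (M_carrier C) (M_point C) (M_trans C) X x0 \<delta> h1 \<longrightarrow>
                   aut_morph (M_carrier C) (M_point C) (M_trans C) X x0 \<delta> h2 \<longrightarrow>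
                   (\<forall>q\<in>M_carrier C. h1 q = h2 q)))"
proof (intro conjI allI impI ballI)
  show "\<And>X x0 d. reachable_aut X x0 d \<Longrightarrow> monoid_congruence (ker_aut X d)" by (rule P1)
  show "\<And>X x0 d Y y0 g h. reachable_aut X x0 d \<Longrightarrow> reachable_aut Y y0 g \<Longrightarrow> aut_morph X x0 d Y y0 g h \<Longrightarrow>
        ker_aut X d \<subseteq> ker_aut Y g" by (rule P2)
  show "\<And>C. monoid_congruence C \<Longrightarrow> reachable_aut (M_carrier C) (M_point C) (M_trans C)" by (rule P3)
  show "\<And>C w a. monoid_congruence C \<Longrightarrow> M_trans C (C `` {w}) a = C `` {w @ [a]}" by (rule trans_cls)
  show "\<And>C D w. monoid_congruence C \<Longrightarrow> monoid_congruence D \<Longrightarrow> C \<subseteq> D \<Longrightarrow> M_mor C D (C `` {w}) = D `` {w}"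
    by (rule mor_cls)
  show "\<And>C D. monoid_congruence C \<Longrightarrow> monoid_congruence D \<Longrightarrow> C \<subseteq> D \<Longrightarrow>
   aut_morph (M_carrier C) (M_point C) (M_trans C) (M_carrier D) (M_point D) (M_trans D) (M_mor C D)"
    by (rule P4)
  show "\<And>C q. monoid_congruence C \<Longrightarrow> q \<in> M_carrier C \<Longrightarrow> M_mor C C q = q"
  proof -
    fix C q assume c: "monoid_congruence C" and q: "q \<in> M_carrier C"
    obtain w where w: "q = C `` {w}" using carrier_cases q by blast
    show "M_mor C C q = q" unfolding w by (rule mor_cls[OF c c order_refl])
  qed
  show "\<And>C D E q. monoid_congruence C \<Longrightarrow> monoid_congruence D \<Longrightarrow> monoid_congruence E \<Longrightarrow>
     C \<subseteq> D \<Longrightarrow> D \<subseteq> E \<Longrightarrow> q \<in> M_carrier C \<Longrightarrow> M_mor D E (M_mor C D q) = M_mor C E q"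
  proof -
    fix C D E q assume a: "monoid_congruence C" "monoid_congruence D" "monoid_congruence E"
      "C \<subseteq> D" "D \<subseteq> E" "q \<in> M_carrier C"
    obtain w where "q = C `` {w}" using carrier_cases a(6) by blast
    moreover have "C \<subseteq> E" using a(4,5) by (rule order_trans)
    ultimately show "M_mor D E (M_mor C D q) = M_mor C E q"
      using mor_cls[OF a(1,2,4)] mor_cls[OF a(2,3,5)] mor_cls[OF a(1,3)] by simp
  qed
  fix C :: "('a list \<times> 'a list) set" and X :: "'s set" and x0 and d :: "'s \<Rightarrow> 'a \<Rightarrow> 's"
  assume c: "monoid_congruence C" and r: "reachable_aut X x0 d"
  show "(\<exists>h. aut_morph (M_carrier C) (M_point C) (M_trans C) X x0 d h) = (C \<subseteq> ker_aut X d)"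
    using P7a[OF c r] P7b[OF c r] by blast
  fix h1 h2 q
  assume h1: "aut_morph (M_carrier C) (M_point C) (M_trans C) X x0 d h1"
    and h2: "aut_morph (M_carrier C) (M_point C) (M_trans C) X x0 d h2" and q: "q \<in> M_carrier C"
  obtain w where "q = C `` {w}" using carrier_cases q by blast
  then show "h1 q = h2 q" using morM[OF c r h1] morM[OF c r h2] by simp
qed

end
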